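(* Let $\mathcal{G}$ be an undirected graph on $N$ vertices with symmetric weighted adjacency matrix $\mathbf{A}$ having nonnegative entries ($a_{ij}>0$ on edges, $a_{ij}=0$ otherwise, $a_{ii}=0$), weighted degree matrix $\mathbf{D}=\mathrm{diag}(d_{ii})$ with $d_{ii}=\sum_j a_{ij}$, and deformed Laplacian $\mathbf{L}_{\mathrm{DF}}(r)=(\mathbf{D}-\mathbf{I})r^2-\mathbf{A}r+\mathbf{I}$. Then: (a) $\mathbf{L}_{\mathrm{DF}}(r)$ is a regular matrix polynomial and $0$ is never an eigenvalue of it; (b) $1$ is always an eigenvalue of $\mathbf{L}_{\mathrm{DF}}(r)$, with geometric multiplicity equal to the number of connected components of $\mathcal{G}$; (c) the geometric multiplicity of $\infty$ as an eigenvalue of $\mathbf{L}_{\mathrm{DF}}(r)$ equals the number of vertices of (weighted) degree $d_{ii}=1$; in particular $\infty$ is an eigenvalue iff $\mathcal{G}$ has at least one vertex of degree $1$; (d) $-1$ is an eigenvalue of $\mathbf{L}_{\mathrm{DF}}(r)$ if and only if $\mathcal{G}$ has at least one bipartite connected component, and in that case its geometric multiplicity equals the number of bipartite connected components of $\mathcal{G}$.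
   Context: For a square matrix polynomial $\mathbf{P}(r)=\sum_{j=0}^k \mathbf{A}_j r^j$ with $\mathbf{A}_k\neq 0$: it is regular if $\det\mathbf{P}(r)$ is not identically zero; a finite eigenvalue is $r_0\in\mathbb{C}$ with $\det\mathbf{P}(r_0)=0$, with geometric multiplicity $\dim\ker\mathbf{P}(r_0)$; $\infty$ is an eigenvalue if $0$ is an eigenvalue of the reversal polynomial $r^k\mathbf{P}(1/r)$, and its geometric multiplicity is $\dim\ker\mathbf{A}_k$ (for $\mathbf{L}_{\mathrm{DF}}$, $\dim\ker(\mathbf{D}-\mathbf{I})$). A connected component is bipartite if its vertex set splits into two disjoint sets with every edge joining the two sets (isolated vertices count as bipartite components). *)

theory Defs
  imports "HOL-Analysis.Analysis"
begin

text \<open>A square matrix polynomial of grade k is given by its coefficient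
  function C (coefficients C 0, ..., C k); its value at r is the sum of r^j C j.\<close>

definition mpeval :: "(nat \<Rightarrow> complex^'n^'n) \<Rightarrow> nat \<Rightarrow> complex \<Rightarrow> complex^'n^'n" where
  "mpeval C k r = (\<chi> a b. \<Sum>j\<le>k. r ^ j * (C j $ a $ b))"

definition mp_regular :: "(nat \<Rightarrow> complex^'n^'n) \<Rightarrow> nat \<Rightarrow> bool" where
  "mp_regular C k \<longleftrightarrow> (\<exists>r. det (mpeval C k r) \<noteq> 0)"

definition mp_eigenvalue :: "(nat \<Rightarrow> complex^'n^'n) \<Rightarrow> nat \<Rightarrow> complex \<Rightarrow> bool" where
  "mp_eigenvalue C k r0 \<longleftrightarrow> det (mpeval C k r0) = 0"

definition mp_geom_mult :: "(nat \<Rightarrow> complex^'n^'n) \<Rightarrow> nat \<Rightarrow> complex \<Rightarrow> nat" where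
  "mp_geom_mult C k r0 = vec.dim {x. mpeval C k r0 *v x = 0}"

text \<open>Reversal polynomial r^k P(1/r).\<close>
definition mp_reversal :: "(nat \<Rightarrow> complex^'n^'n) \<Rightarrow> nat \<Rightarrow> nat \<Rightarrow> complex^'n^'n" where
  "mp_reversal C k j = (if j \<le> k then C (k - j) else 0)"

definition mp_inf_eigenvalue :: "(nat \<Rightarrow> complex^'n^'n) \<Rightarrow> nat \<Rightarrow> bool" where
  "mp_inf_eigenvalue C k \<longleftrightarrow> mp_eigenvalue (mp_reversal C k) k 0"

definition mp_geom_mult_inf :: "(nat \<Rightarrow> complex^'n^'n) \<Rightarrow> nat \<Rightarrow> nat" where
  "mp_geom_mult_inf C k = mp_geom_mult (mp_reversal C k) k 0"

definition weighted_adjacency :: "real^'n^'n \<Rightarrow> bool" where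
  "weighted_adjacency A \<longleftrightarrow>
     (\<forall>i j. A $ i $ j = A $ j $ i) \<and> (\<forall>i j. 0 \<le> A $ i $ j) \<and> (\<forall>i. A $ i $ i = 0)"

definition adj :: "real^'n^'n \<Rightarrow> 'n \<Rightarrow> 'n \<Rightarrow> bool" where
  "adj A i j \<longleftrightarrow> A $ i $ j > 0"

definition wdeg :: "real^'n^'n \<Rightarrow> 'n \<Rightarrow> real" where
  "wdeg A i = (\<Sum>j\<in>UNIV. A $ i $ j)"

definition degree_matrix :: "real^'n^'n \<Rightarrow> real^'n^'n" where
  "degree_matrix A = (\<chi> i j. if i = j then wdeg A i else 0)"

definition components :: "real^'n^'n \<Rightarrow> 'n set set" where
  "components A = UNIV // {(i, j). (adj A)\<^sup>*\<^sup>* i j}"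

definition bipartite_on :: "real^'n^'n \<Rightarrow> 'n set \<Rightarrow> bool" where
  "bipartite_on A C \<longleftrightarrow> (\<exists>S T. S \<inter> T = {} \<and> S \<union> T = C \<and>
      (\<forall>i\<in>C. \<forall>j\<in>C. adj A i j \<longrightarrow> (i \<in> S \<and> j \<in> T) \<or> (i \<in> T \<and> j \<in> S)))"

definition bipartite_components :: "real^'n^'n \<Rightarrow> 'n set set" where
  "bipartite_components A = {C \<in> components A. bipartite_on A C}"

definition cmat :: "real^'n^'n \<Rightarrow> complex^'n^'n" where
  "cmat M = (\<chi> i j. complex_of_real (M $ i $ j))"

definition LDF :: "real^'n^'n \<Rightarrow> nat \<Rightarrow> complex^'n^'n" where
  "LDF A j = (if j = 0 then mat 1
              else if j = 1 then - cmat A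
              else if j = 2 then cmat (degree_matrix A - mat 1)
              else 0)"

end

theory Submission imports Defs begin

lemma det0_iff:
  fixes M :: "complex^'n^'n"
  shows "det M = 0 \<longleftrightarrow> (\<exists>x. x \<noteq> 0 \<and> M *v x = 0)"
  by (metis invertible_det_nz invertible_left_inverse matrix_left_invertible_ker)

lemma mpeval_LDF:
  "mpeval (LDF A) 2 r $ a $ b = (if a = b then 1 else 0) - r * of_real (A$a$b)
     + r^2 * (of_real (degree_matrix A $ a $ b) - (if a = b then 1 else 0))"
  unfolding mpeval_def LDF_def cmat_def
  by (simp add: numeral_2_eq_2 atMost_Suc mat_def)

lemma mpeval_rev0:
  "mpeval (mp_reversal (LDF A) 2) 2 0 = cmat (degree_matrix A - mat 1)"
  unfolding mpeval_def mp_reversal_def LDF_def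
  by (simp add: numeral_2_eq_2 atMost_Suc vec_eq_iff)

definition Mop :: "real^'n^'n \<Rightarrow> real \<Rightarrow> complex^'n^'n" where
  "Mop A s = (\<chi> a b. of_real ((if a = b then wdeg A a else 0) - s * A$a$b))"

lemma mpeval_1: "mpeval (LDF A) 2 1 = Mop A 1"
  by (simp add: vec_eq_iff mpeval_LDF Mop_def degree_matrix_def)

lemma mpeval_m1: "mpeval (LDF A) 2 (-1) = Mop A (-1)"
  by (simp add: vec_eq_iff mpeval_LDF Mop_def degree_matrix_def)

lemma mpeval_0: "mpeval (LDF A) 2 0 = mat 1"
  by (simp add: vec_eq_iff mpeval_LDF mat_def)


lemma wa_sym: "weighted_adjacency A \<Longrightarrow> A$i$j = A$j$i"
  and wa_nn: "weighted_adjacency A \<Longrightarrow> 0 \<le> A$i$j"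
  by (auto simp: weighted_adjacency_def)

lemma real_quad:
  fixes A :: "real^'n^'n" and y :: "'n \<Rightarrow> real"
  assumes wa: "weighted_adjacency A" and s: "s = 1 \<or> s = -1"
    and h: "\<And>a. (\<Sum>b\<in>UNIV. A$a$b * (y a - s * y b)) = 0"
    and ad: "adj A a b"
  shows "y a = s * y b"
proof -
  have ss: "s * s = 1" using s by auto
  have "(\<Sum>a\<in>UNIV. \<Sum>b\<in>UNIV. A$a$b * (y a - s * y b)^2)
      = (\<Sum>a\<in>UNIV. \<Sum>b\<in>UNIV. A$a$b * (y a - s * y b) * y a)
        - s * (\<Sum>a\<in>UNIV. \<Sum>b\<in>UNIV. A$a$b * (y a - s * y b) * y b)"
  proof -
    have "\<And>a b. A$a$b * (y a - s * y b)^2 = A$a$b * (y a - s * y b) * y a - s * (A$a$b * (y a - s * y b) * y b)"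
      by (simp add: power2_eq_square algebra_simps)
    thus ?thesis by (simp only: sum_subtractf sum_distrib_left)
  qed
  also have "(\<Sum>a\<in>UNIV. \<Sum>b\<in>UNIV. A$a$b * (y a - s * y b) * y b)
      = (\<Sum>a\<in>UNIV. \<Sum>b\<in>UNIV. A$a$b * (y b - s * y a) * y a)"
    by (subst sum.swap) (simp add: wa_sym[OF wa])
  also have "s * \<dots> = - (\<Sum>a\<in>UNIV. \<Sum>b\<in>UNIV. A$a$b * (y a - s * y b) * y a)"
  proof -
    have "\<And>a b. s * (A$a$b * (y b - s * y a) * y a) = - (A$a$b * (y a - s * y b) * y a)"
      using s by (elim disjE) (simp_all add: algebra_simps)
    thus ?thesis by (simp only: sum_distrib_left sum_negf)
  qed
  also have "(\<Sum>a\<in>UNIV. \<Sum>b\<in>UNIV. A$a$b * (y a - s * y b) * y a) = 0"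
    using h by (simp add: sum_distrib_right[symmetric])
  finally have tot: "(\<Sum>a\<in>UNIV. \<Sum>b\<in>UNIV. A$a$b * (y a - s * y b)^2) = 0" by simp
  have nn: "\<And>a b. 0 \<le> A$a$b * (y a - s * y b)^2" using wa_nn[OF wa] by simp
  have "(\<Sum>b\<in>UNIV. A$a$b * (y a - s * y b)^2) = 0"
    using tot by (subst (asm) sum_nonneg_eq_0_iff) (auto intro: sum_nonneg nn)
  hence "A$a$b * (y a - s * y b)^2 = 0"
    by (subst (asm) sum_nonneg_eq_0_iff) (auto intro: nn)
  thus ?thesis using ad by (simp add: adj_def)
qed


lemma Mop_mult:
  "(Mop A s *v x) $ a = (\<Sum>b\<in>UNIV. of_real (A$a$b) * (x$a - of_real s * x$b))"
proof -
  have "(Mop A s *v x) $ a = (\<Sum>b\<in>UNIV. (if a = b then of_real (wdeg A a) * x$b else 0)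
           - of_real (A$a$b) * (of_real s * x$b))"
    unfolding Mop_def matrix_vector_mult_def vec_lambda_beta
    by (intro sum.cong) (auto simp: algebra_simps)
  also have "\<dots> = of_real (wdeg A a) * x$a - (\<Sum>b\<in>UNIV. of_real (A$a$b) * (of_real s * x$b))"
    by (simp add: sum_subtractf)
  also have "of_real (wdeg A a) * x$a = (\<Sum>b\<in>UNIV. of_real (A$a$b) * x$a)"
    by (simp add: wdeg_def sum_distrib_right)
  finally show ?thesis by (simp add: sum_subtractf right_diff_distrib)
qed

lemma ker_Mop:
  fixes A :: "real^'n^'n"
  assumes wa: "weighted_adjacency A" and s: "s = 1 \<or> s = -1"
  shows "(Mop A s *v x = 0) \<longleftrightarrow> (\<forall>i j. adj A i j \<longrightarrow> x$i = of_real s * x$j)"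
proof
  assume h: "\<forall>i j. adj A i j \<longrightarrow> x$i = of_real s * x$j"
  show "Mop A s *v x = 0"
  proof (subst vec_eq_iff, intro allI)
    fix a
    have z: "\<And>b. of_real (A$a$b) * (x$a - of_real s * x$b) = 0"
    proof -
      fix b
      show "of_real (A$a$b) * (x$a - of_real s * x$b) = 0"
      proof (cases "adj A a b")
        case True thus ?thesis using h by auto
      next
        case False
        hence "A$a$b = 0" using wa_nn[OF wa, of a b] by (simp add: adj_def)
        thus ?thesis by simp
      qed
    qed
    show "(Mop A s *v x) $ a = 0 $ a" unfolding Mop_mult z by simp
  qed
next
  assume h: "Mop A s *v x = 0"
  have hh: "\<And>a. (\<Sum>b\<in>UNIV. of_real (A$a$b) * (x$a - of_real s * x$b)) = 0"
    using h by (metis Mop_mult zero_index)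
  have re: "\<And>a. (\<Sum>b\<in>UNIV. A$a$b * (Re (x$a) - s * Re (x$b))) = 0"
  proof -
    fix a
    have "Re (\<Sum>b\<in>UNIV. of_real (A$a$b) * (x$a - of_real s * x$b)) = 0" using hh by simp
    thus "(\<Sum>b\<in>UNIV. A$a$b * (Re (x$a) - s * Re (x$b))) = 0" by (simp add: Re_sum)
  qed
  have im: "\<And>a. (\<Sum>b\<in>UNIV. A$a$b * (Im (x$a) - s * Im (x$b))) = 0"
  proof -
    fix a
    have "Im (\<Sum>b\<in>UNIV. of_real (A$a$b) * (x$a - of_real s * x$b)) = 0" using hh by simp
    thus "(\<Sum>b\<in>UNIV. A$a$b * (Im (x$a) - s * Im (x$b))) = 0" by (simp add: Im_sum)
  qed
  show "\<forall>i j. adj A i j \<longrightarrow> x$i = of_real s * x$j"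
  proof (intro allI impI)
    fix i j assume ad: "adj A i j"
    have "Re (x$i) = s * Re (x$j)" by (rule real_quad[OF wa s re ad])
    moreover have "Im (x$i) = s * Im (x$j)" by (rule real_quad[OF wa s im ad])
    ultimately show "x$i = of_real s * x$j" by (simp add: complex_eq_iff)
  qed
qed


lemma adj_sym: "weighted_adjacency A \<Longrightarrow> adj A i j \<Longrightarrow> adj A j i"
  by (simp add: adj_def wa_sym)

lemma R_sym: "weighted_adjacency A \<Longrightarrow> (adj A)\<^sup>*\<^sup>* i j \<Longrightarrow> (adj A)\<^sup>*\<^sup>* j i"
  by (metis adj_sym symp_rtranclp sympD sympI)

lemma comp_iff: "C \<in> components A \<longleftrightarrow> (\<exists>i. C = {j. (adj A)\<^sup>*\<^sup>* i j})"
  unfolding components_def quotient_def by auto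

lemma comp_mem:
  assumes wa: "weighted_adjacency A" and C: "C \<in> components A" and i: "i \<in> C"
  shows "C = {j. (adj A)\<^sup>*\<^sup>* i j}"
proof -
  obtain k where k: "C = {j. (adj A)\<^sup>*\<^sup>* k j}" using C comp_iff by blast
  have ki: "(adj A)\<^sup>*\<^sup>* k i" using i k by auto
  show ?thesis unfolding k
    using ki R_sym[OF wa ki] by (auto intro: rtranclp_trans)
qed

lemma comp_adj:
  assumes wa: "weighted_adjacency A" and C: "C \<in> components A" and i: "i \<in> C"
    and ad: "adj A i j"
  shows "j \<in> C"
  using comp_mem[OF wa C i] ad by auto

lemma comp_ne: "C \<in> components A \<Longrightarrow> \<exists>i. i \<in> C"
  by (auto simp: comp_iff)

lemma comp_disj:
  "weighted_adjacency A \<Longrightarrow> C \<in> components A \<Longrightarrow> C' \<in> components A \<Longrightarrow> i \<in> C \<Longrightarrow> i \<in> C'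
   \<Longrightarrow> C = C'"
  using comp_mem by blast

lemma comp_ex: "\<exists>C\<in>components A. i \<in> C"
  by (rule bexI[of _ "{j. (adj A)\<^sup>*\<^sup>* i j}"]) (auto simp: comp_iff)

lemma comp_finite: "finite (components (A::real^'n^'n))"
  by (rule finite_subset[of _ "Pow UNIV"]) auto

lemma propagate_aux:
  assumes "(adj A)\<^sup>*\<^sup>* i j" and "\<And>a b. (adj A)\<^sup>*\<^sup>* i a \<Longrightarrow> adj A a b \<Longrightarrow> f a = f b"
  shows "f i = f j"
  using assms
proof (induction rule: rtranclp_induct)
  case base thus ?case by simp
next
  case (step y z) thus ?case by (metis rtranclp.rtrancl_into_rtrancl)
qed

lemma propagate:
  assumes wa: "weighted_adjacency A" and C: "C \<in> components A" and i: "i \<in> C" and j: "j \<in> C"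
    and h: "\<And>a b. a \<in> C \<Longrightarrow> adj A a b \<Longrightarrow> f a = f b"
  shows "f i = f j"
proof -
  have e: "C = {j. (adj A)\<^sup>*\<^sup>* i j}" by (rule comp_mem[OF wa C i])
  show ?thesis
    by (rule propagate_aux[where A=A]) (use j e h in auto)
qed


lemma dim_general:
  fixes A :: "real^'n^'n" and s :: complex and Rs :: "'n set set"
  assumes wa: "weighted_adjacency A" and s: "s = 1 \<or> s = -1"
    and Rsub: "Rs \<subseteq> components A"
    and sig: "\<And>C. C \<in> Rs \<Longrightarrow> \<exists>\<sigma>. (\<forall>i\<in>C. \<sigma> i = 1 \<or> \<sigma> i = -1) \<and> (\<forall>i\<in>C. \<forall>j. adj A i j \<longrightarrow> \<sigma> i = s * \<sigma> j)"
    and van: "\<And>C (x::complex^'n) i. C \<in> components A \<Longrightarrow> C \<notin> Rs \<Longrightarrow> (\<forall>i j. adj A i j \<longrightarrow> x$i = s * x$j)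
               \<Longrightarrow> i \<in> C \<Longrightarrow> x$i = 0"
  defines "K \<equiv> {x::complex^'n. \<forall>i j. adj A i j \<longrightarrow> x$i = s * x$j}"
  shows "vec.dim K = card Rs \<and> (K = {0} \<longleftrightarrow> Rs = {})"
proof -
  obtain sg where sg: "\<And>C. C \<in> Rs \<Longrightarrow> (\<forall>i\<in>C. sg C i = 1 \<or> sg C i = -1) \<and> (\<forall>i\<in>C. \<forall>j. adj A i j \<longrightarrow> sg C i = s * sg C j)"
    using sig by metis
  define v where "v C = (\<chi> i. if i \<in> C then sg C i else 0)" for C
  have compC: "C \<in> components A" if "C \<in> Rs" for C using Rsub that by auto
  have vK: "v C \<in> K" if C: "C \<in> Rs" for C
    unfolding K_def
  proof (intro CollectI allI impI)
    fix i j assume ad: "adj A i j"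
    show "v C $ i = s * v C $ j"
    proof (cases "i \<in> C")
      case True
      hence "j \<in> C" using comp_adj[OF wa compC[OF C] True ad] by simp
      thus ?thesis using True sg[OF C] ad by (simp add: v_def)
    next
      case False
      hence "j \<notin> C" using comp_adj[OF wa compC[OF C] _ adj_sym[OF wa ad]] by blast
      thus ?thesis using False by (simp add: v_def)
    qed
  qed
  have vi: "v C $ i \<noteq> 0" if "C \<in> Rs" "i \<in> C" for C i
    using sg[OF that(1)] that by (force simp: v_def)
  have v0: "v C $ i = 0" if "i \<notin> C" for C i
    using that by (simp add: v_def)
  have inj: "inj_on v Rs"
  proof (rule inj_onI)
    fix C C' assume C: "C \<in> Rs" and C': "C' \<in> Rs" and e: "v C = v C'"
    obtain i where i: "i \<in> C" using comp_ne[OF compC[OF C]] by blast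
    have "v C' $ i \<noteq> 0" using e vi[OF C i] by simp
    hence "i \<in> C'" using v0 by blast
    thus "C = C'" using comp_disj[OF wa compC[OF C] compC[OF C'] i] by simp
  qed
  have fin: "finite Rs" using finite_subset[OF Rsub comp_finite] .
  have single: "(\<Sum>C\<in>Rs. g C * v C $ i) = g C0 * v C0 $ i" if C0: "C0 \<in> Rs" and i: "i \<in> C0" for g C0 i
  proof -
    have "(\<Sum>C\<in>Rs. g C * v C $ i) = g C0 * v C0 $ i + (\<Sum>C\<in>Rs - {C0}. g C * v C $ i)"
      using fin C0 by (simp add: sum.remove)
    also have "(\<Sum>C\<in>Rs - {C0}. g C * v C $ i) = 0"
    proof (rule sum.neutral, intro ballI)
      fix C assume C: "C \<in> Rs - {C0}"
      have "i \<notin> C" using C comp_disj[OF wa compC[OF C0] compC, of C i] i by auto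
      thus "g C * v C $ i = 0" by (simp add: v0)
    qed
    finally show ?thesis by simp
  qed
  have span: "x \<in> vec.span (v ` Rs)" if x: "x \<in> K" for x
  proof -
    define rep where "rep C = (SOME i. i \<in> C)" for C :: "'n set"
    have rep: "rep C \<in> C" if "C \<in> Rs" for C
      unfolding rep_def using comp_ne[OF compC[OF that]] by (metis someI_ex)
    define c where "c C = x $ rep C * sg C (rep C)" for C
    have "x = (\<Sum>C\<in>Rs. c C *s v C)"
    proof (subst vec_eq_iff, intro allI)
      fix i
      obtain Ci where Ci: "Ci \<in> components A" "i \<in> Ci" using comp_ex by blast
      have sumi: "(\<Sum>C\<in>Rs. c C *s v C) $ i = (\<Sum>C\<in>Rs. c C * v C $ i)" by simp
      show "x $ i = (\<Sum>C\<in>Rs. c C *s v C) $ i"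
      proof (cases "Ci \<in> Rs")
        case True
        have "x$i * sg Ci i = x$(rep Ci) * sg Ci (rep Ci)"
        proof (rule propagate[OF wa Ci(1) Ci(2) rep[OF True]])
          fix a b assume a: "a \<in> Ci" and ad: "adj A a b"
          have "x$a = s * x$b" using x ad unfolding K_def by auto
          moreover have "sg Ci a = s * sg Ci b" using sg[OF True] a ad by auto
          ultimately show "x$a * sg Ci a = x$b * sg Ci b" using s by auto
        qed
        hence "x$i * sg Ci i * sg Ci i = c Ci * sg Ci i" by (simp add: c_def)
        moreover have "sg Ci i * sg Ci i = 1" using sg[OF True] Ci(2) by auto
        ultimately have "x$i = c Ci * v Ci $ i" using Ci(2) by (simp add: v_def mult.assoc)
        thus ?thesis using sumi single[OF True Ci(2)] by simp
      next
        case False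
        have "x$i = 0" using van[OF Ci(1) False _ Ci(2), of x] x unfolding K_def by auto
        moreover have "(\<Sum>C\<in>Rs. c C * v C $ i) = 0"
        proof (rule sum.neutral, intro ballI)
          fix C assume C: "C \<in> Rs"
          have "i \<notin> C" using C False comp_disj[OF wa compC[OF C] Ci(1) _ Ci(2)] by auto
          thus "c C * v C $ i = 0" by (simp add: v0)
        qed
        ultimately show ?thesis using sumi by simp
      qed
    qed
    also have "\<dots> \<in> vec.span (v ` Rs)"
      by (intro vec.span_sum vec.span_scale vec.span_base) auto
    finally show ?thesis .
  qed
  have indep: "vec.independent (v ` Rs)"
  proof (rule vec.independent_if_scalars_zero)
    show "finite (v ` Rs)" using fin by simp
  next
    fix f y assume h: "(\<Sum>y\<in>v ` Rs. f y *s y) = 0" and y: "y \<in> v ` Rs"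
    obtain C where C: "C \<in> Rs" and yC: "y = v C" using y by blast
    obtain i where i: "i \<in> C" using comp_ne[OF compC[OF C]] by blast
    have "(\<Sum>C\<in>Rs. f (v C) *s v C) = 0" using h by (simp add: sum.reindex[OF inj])
    hence "(\<Sum>C\<in>Rs. f (v C) *s v C) $ i = 0" by simp
    hence "(\<Sum>C'\<in>Rs. f (v C') * v C' $ i) = 0" by simp
    hence "f (v C) * v C $ i = 0" using single[OF C i] by simp
    thus "f y = 0" using vi[OF C i] yC by simp
  qed
  have dim: "vec.dim K = card Rs"
    by (rule vec.dim_unique[of "v ` Rs"]) (use vK span indep inj card_image in auto)
  have z: "K = {0} \<longleftrightarrow> Rs = {}"
  proof
    assume "K = {0}"
    thus "Rs = {}" using vK vi comp_ne compC by (metis all_not_in_conv singletonD zero_index)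
  next
    assume "Rs = {}"
    hence "K \<subseteq> {0}" using span by auto
    moreover have "0 \<in> K" unfolding K_def by simp
    ultimately show "K = {0}" by auto
  qed
  show ?thesis using dim z by simp
qed


lemma K_eq:
  assumes wa: "weighted_adjacency A" and s: "s = 1 \<or> s = -1"
  shows "{x. Mop A s *v x = 0} = {x::complex^'n. \<forall>i j. adj A i j \<longrightarrow> x$i = of_real s * x$j}"
  using ker_Mop[OF wa s] by blast

lemma dim_plus:
  fixes A :: "real^'n^'n"
  assumes wa: "weighted_adjacency A"
  shows "vec.dim {x. Mop A 1 *v x = 0} = card (components A) \<and> ({x. Mop A 1 *v x = 0} = {0} \<longleftrightarrow> components A = {})"
proof -
  have "vec.dim {x::complex^'n. \<forall>i j. adj A i j \<longrightarrow> x$i = 1 * x$j} = card (components A)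
     \<and> ({x::complex^'n. \<forall>i j. adj A i j \<longrightarrow> x$i = 1 * x$j} = {0} \<longleftrightarrow> components A = {})"
    by (rule dim_general[OF wa]) (auto intro: exI[of _ "\<lambda>_. 1"])
  moreover have "{x. Mop A 1 *v x = 0} = {x::complex^'n. \<forall>i j. adj A i j \<longrightarrow> x$i = 1 * x$j}"
    using K_eq[OF wa, of 1] by simp
  ultimately show ?thesis by simp
qed

lemma nonbip_van:
  fixes A :: "real^'n^'n" and x :: "complex^'n"
  assumes wa: "weighted_adjacency A" and C: "C \<in> components A" and nb: "\<not> bipartite_on A C"
    and x: "\<forall>i j. adj A i j \<longrightarrow> x$i = - 1 * x$j" and i: "i \<in> C"
  shows "x$i = 0"
proof (rule ccontr)
  assume nz: "x$i \<noteq> 0"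
  have sq: "(x$j)^2 = (x$i)^2" if j: "j \<in> C" for j
    by (rule propagate[OF wa C j i]) (use x in auto)
  define S where "S = {j\<in>C. x$j = x$i}"
  define T where "T = {j\<in>C. x$j = - x$i}"
  have "S \<inter> T = {}" using nz by (auto simp: S_def T_def)
  moreover have "S \<union> T = C" using sq by (auto simp: S_def T_def power2_eq_iff)
  moreover have "\<forall>a\<in>C. \<forall>b\<in>C. adj A a b \<longrightarrow> (a \<in> S \<and> b \<in> T) \<or> (a \<in> T \<and> b \<in> S)"
  proof (intro ballI impI)
    fix a b assume a: "a \<in> C" and b: "b \<in> C" and ad: "adj A a b"
    have e: "x$b = - x$a" using x ad by (metis minus_equation_iff mult_minus1)
    have "x$a = x$i \<or> x$a = - x$i" using sq[OF a] by (simp add: power2_eq_iff)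
    thus "(a \<in> S \<and> b \<in> T) \<or> (a \<in> T \<and> b \<in> S)" using a b e by (auto simp: S_def T_def)
  qed
  ultimately have "bipartite_on A C" unfolding bipartite_on_def by blast
  thus False using nb by simp
qed

lemma dim_minus:
  fixes A :: "real^'n^'n"
  assumes wa: "weighted_adjacency A"
  shows "vec.dim {x. Mop A (-1) *v x = 0} = card (bipartite_components A)
     \<and> ({x. Mop A (-1) *v x = 0} = {0} \<longleftrightarrow> bipartite_components A = {})"
proof -
  have "vec.dim {x::complex^'n. \<forall>i j. adj A i j \<longrightarrow> x$i = -1 * x$j} = card (bipartite_components A)
     \<and> ({x::complex^'n. \<forall>i j. adj A i j \<longrightarrow> x$i = -1 * x$j} = {0} \<longleftrightarrow> bipartite_components A = {})"
  proof (rule dim_general[OF wa])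
    show "bipartite_components A \<subseteq> components A" by (auto simp: bipartite_components_def)
  next
    fix C assume C: "C \<in> bipartite_components A"
    then obtain S T where ST: "S \<inter> T = {}" "S \<union> T = C"
      "\<forall>i\<in>C. \<forall>j\<in>C. adj A i j \<longrightarrow> (i \<in> S \<and> j \<in> T) \<or> (i \<in> T \<and> j \<in> S)"
      and Cc: "C \<in> components A"
      by (auto simp: bipartite_components_def bipartite_on_def)
    show "\<exists>\<sigma>. (\<forall>i\<in>C. \<sigma> i = (1::complex) \<or> \<sigma> i = -1) \<and> (\<forall>i\<in>C. \<forall>j. adj A i j \<longrightarrow> \<sigma> i = -1 * \<sigma> j)"
    proof -
      define \<sigma> :: "'n \<Rightarrow> complex" where "\<sigma> i = (if i \<in> S then 1 else -1)" for i
      have "\<forall>i\<in>C. \<forall>j. adj A i j \<longrightarrow> \<sigma> i = -1 * \<sigma> j"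
      proof (intro ballI allI impI)
        fix i j assume i: "i \<in> C" and ad: "adj A i j"
        have j: "j \<in> C" by (rule comp_adj[OF wa Cc i ad])
        show "\<sigma> i = -1 * \<sigma> j"
          using ST(1) ST(3) i j ad by (auto simp: \<sigma>_def)
      qed
      moreover have "\<forall>i\<in>C. \<sigma> i = 1 \<or> \<sigma> i = -1" by (simp add: \<sigma>_def)
      ultimately show ?thesis by blast
    qed
  next
    fix C i and x :: "complex^'n"
    assume h: "C \<in> components A" "C \<notin> bipartite_components A"
      "\<forall>i j. adj A i j \<longrightarrow> x$i = -1 * x$j" "i \<in> C"
    have "\<not> bipartite_on A C" using h(1,2) by (simp add: bipartite_components_def)
    thus "x$i = 0" by (rule nonbip_van[OF wa h(1) _ h(3,4)])
  qed simp
  moreover have "{x. Mop A (-1) *v x = 0} = {x::complex^'n. \<forall>i j. adj A i j \<longrightarrow> x$i = -1 * x$j}"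
    using K_eq[OF wa, of "-1"] by simp
  ultimately show ?thesis by simp
qed


lemma inf_kernel:
  "{x. cmat (degree_matrix A - mat 1) *v x = 0} = {x::complex^'n. \<forall>i. i \<notin> {i. wdeg A i = 1} \<longrightarrow> x$i = 0}"
proof -
  have e: "(cmat (degree_matrix A - mat 1) *v x) $ i = of_real (wdeg A i - 1) * x$i" for x :: "complex^'n" and i
  proof -
    have "(cmat (degree_matrix A - mat 1) *v x) $ i
        = (\<Sum>j\<in>UNIV. if i = j then of_real (wdeg A i - 1) * x$j else 0)"
      unfolding cmat_def matrix_vector_mult_def degree_matrix_def mat_def vec_lambda_beta
      by (intro sum.cong) auto
    thus ?thesis by simp
  qed
  show ?thesis by (auto simp: vec_eq_iff e)
qed


theorem proposition3:
  fixes A :: "real^'n^'n"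
  assumes "weighted_adjacency A"
  shows "(mp_regular (LDF A) 2 \<and> \<not> mp_eigenvalue (LDF A) 2 0)
       \<and> (mp_eigenvalue (LDF A) 2 1 \<and> mp_geom_mult (LDF A) 2 1 = card (components A))
       \<and> (mp_geom_mult_inf (LDF A) 2 = card {i. wdeg A i = 1}
          \<and> (mp_inf_eigenvalue (LDF A) 2 \<longleftrightarrow> (\<exists>i. wdeg A i = 1)))
       \<and> ((mp_eigenvalue (LDF A) 2 (-1) \<longleftrightarrow> bipartite_components A \<noteq> {})
          \<and> (bipartite_components A \<noteq> {} \<longrightarrow>
               mp_geom_mult (LDF A) 2 (-1) = card (bipartite_components A)))"
proof -
  note wa = assms
  have a1: "mp_regular (LDF A) 2"
    unfolding mp_regular_def by (rule exI[of _ 0]) (simp add: mpeval_0)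
  have a2: "\<not> mp_eigenvalue (LDF A) 2 0"
    unfolding mp_eigenvalue_def by (simp add: mpeval_0)
  have z1: "0 \<in> {x. Mop A 1 *v x = 0}" and z2: "0 \<in> {x. Mop A (-1) *v x = 0}" by auto
  have ne: "components A \<noteq> {}" using comp_ex by blast
  have b1: "mp_eigenvalue (LDF A) 2 1"
    unfolding mp_eigenvalue_def mpeval_1 det0_iff
    using dim_plus[OF wa] ne z1 by blast
  have b2: "mp_geom_mult (LDF A) 2 1 = card (components A)"
    unfolding mp_geom_mult_def mpeval_1 using dim_plus[OF wa] by simp
  have c1: "mp_geom_mult_inf (LDF A) 2 = card {i. wdeg A i = 1}"
    unfolding mp_geom_mult_inf_def mp_geom_mult_def mpeval_rev0 inf_kernel
    by (rule dim_substandard_cart)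
  have c2: "mp_inf_eigenvalue (LDF A) 2 \<longleftrightarrow> (\<exists>i. wdeg A i = 1)"
  proof -
    have "mp_inf_eigenvalue (LDF A) 2 \<longleftrightarrow>
          (\<exists>x. x \<noteq> 0 \<and> x \<in> {x::complex^'n. \<forall>i. i \<notin> {i. wdeg A i = 1} \<longrightarrow> x$i = 0})"
      unfolding mp_inf_eigenvalue_def mp_eigenvalue_def mpeval_rev0 det0_iff
      using inf_kernel[of A] by blast
    also have "\<dots> \<longleftrightarrow> (\<exists>i. wdeg A i = 1)"
    proof
      assume "\<exists>x. x \<noteq> 0 \<and> x \<in> {x::complex^'n. \<forall>i. i \<notin> {i. wdeg A i = 1} \<longrightarrow> x$i = 0}"
      then obtain x :: "complex^'n" where "x \<noteq> 0" "\<forall>i. wdeg A i \<noteq> 1 \<longrightarrow> x$i = 0" by auto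
      thus "\<exists>i. wdeg A i = 1" by (metis vec_eq_iff zero_index)
    next
      assume "\<exists>i. wdeg A i = 1"
      then obtain i where i: "wdeg A i = 1" by blast
      show "\<exists>x. x \<noteq> 0 \<and> x \<in> {x::complex^'n. \<forall>i. i \<notin> {i. wdeg A i = 1} \<longrightarrow> x$i = 0}"
        by (rule exI[of _ "axis i 1"]) (auto simp: axis_def i vec_eq_iff)
    qed
    finally show ?thesis .
  qed
  have d1: "mp_eigenvalue (LDF A) 2 (-1) \<longleftrightarrow> bipartite_components A \<noteq> {}"
    unfolding mp_eigenvalue_def mpeval_m1 det0_iff
    using dim_minus[OF wa] z2 by blast
  have d2: "mp_geom_mult (LDF A) 2 (-1) = card (bipartite_components A)"
    unfolding mp_geom_mult_def mpeval_m1 using dim_minus[OF wa] by simp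
  show ?thesis using a1 a2 b1 b2 c1 c2 d1 d2 by blast
qed

end
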